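(* Let $G$ be a Lie group, $M$ a smooth manifold, $\Phi : G\times M\to M$ a smooth left action, and $\phi : \mathbb{R}\times M\to M$ a flow. Then the following are equivalent: (i) for every $t\in\mathbb{R}$, the diffeomorphism $\phi_t$ is weakly $\Phi$-invariant; (ii) there exists $\varepsilon>0$ such that for every $t\in(-\varepsilon,\varepsilon)$, $\phi_t$ is weakly $\Phi$-invariant.
   Context: A flow is a smooth map $\phi:\mathbb{R}\times M\to M$ with $\phi_{t_1+t_2} = \phi_{t_1}\circ\phi_{t_2}$ and $\phi_0 = \mathrm{id}_M$. A diffeomorphism $f : M\to M$ is weakly $\Phi$-invariant if there exists a map $\sigma : G\to G$ such that $f = \Phi_{\sigma(g)^{-1}}\circ f\circ\Phi_g$ for all $g\in G$, where $\Phi_g = \Phi(g,\cdot)$. *)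

theory Defs
  imports "HOL-Analysis.Analysis" "HOL-Algebra.Group"
begin

fun iter_dd :: "('a::euclidean_space \<Rightarrow> 'b::real_normed_vector) \<Rightarrow> 'a list \<Rightarrow> 'a \<Rightarrow> 'b" where
  "iter_dd f [] = f"
| "iter_dd f (v # vs) = (\<lambda>x. frechet_derivative (iter_dd f vs) (at x) v)"

definition smooth_on :: "'a::euclidean_space set \<Rightarrow> ('a \<Rightarrow> 'b::euclidean_space) \<Rightarrow> bool" where
  "smooth_on U f \<longleftrightarrow> open U \<and>
     (\<forall>vs. continuous_on U (iter_dd f vs) \<and> (\<forall>x\<in>U. iter_dd f vs differentiable (at x)))"

definition is_chart :: "('m::topological_space set \<times> ('m \<Rightarrow> 'e::euclidean_space)) \<Rightarrow> bool" where
  "is_chart Uc \<longleftrightarrow> (case Uc of (U, c) \<Rightarrow>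
      open U \<and> open (c ` U) \<and> homeomorphism U (c ` U) c (inv_into U c))"

definition smooth_atlas :: "('m::topological_space set \<times> ('m \<Rightarrow> 'e::euclidean_space)) set \<Rightarrow> bool" where
  "smooth_atlas A \<longleftrightarrow> (\<forall>Uc\<in>A. is_chart Uc) \<and> (\<Union>(fst ` A) = UNIV) \<and>
     (\<forall>(U, c)\<in>A. \<forall>(V, d)\<in>A. smooth_on (c ` (U \<inter> V)) (d \<circ> inv_into U c))"

text \<open>A smooth manifold: Hausdorff, second countable (type classes) with a smooth atlas.\<close>
definition smooth_manifold :: "('m::{t2_space, second_countable_topology} set \<times> ('m \<Rightarrow> 'e::euclidean_space)) set \<Rightarrow> bool" where
  "smooth_manifold A \<longleftrightarrow> smooth_atlas A"

definition smooth_map ::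
  "('m::topological_space set \<times> ('m \<Rightarrow> 'e::euclidean_space)) set \<Rightarrow>
   ('n::topological_space set \<times> ('n \<Rightarrow> 'f::euclidean_space)) set \<Rightarrow> ('m \<Rightarrow> 'n) \<Rightarrow> bool" where
  "smooth_map A B f \<longleftrightarrow> continuous_on UNIV f \<and>
     (\<forall>(U, c)\<in>A. \<forall>(V, d)\<in>B. smooth_on (c ` (U \<inter> f -` V)) (d \<circ> f \<circ> inv_into U c))"

definition prod_atlas ::
  "('m set \<times> ('m \<Rightarrow> 'e)) set \<Rightarrow> ('n set \<times> ('n \<Rightarrow> 'f)) set \<Rightarrow>
   (('m \<times> 'n) set \<times> ('m \<times> 'n \<Rightarrow> 'e \<times> 'f)) set" where
  "prod_atlas A B = {(U \<times> V, \<lambda>(x, y). (c x, d y)) | U c V d. (U, c) \<in> A \<and> (V, d) \<in> B}"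

definition real_atlas :: "(real set \<times> (real \<Rightarrow> real)) set" where
  "real_atlas = {(UNIV, id)}"

definition diffeomorphism ::
  "('m::topological_space set \<times> ('m \<Rightarrow> 'e::euclidean_space)) set \<Rightarrow> ('m \<Rightarrow> 'm) \<Rightarrow> bool" where
  "diffeomorphism A f \<longleftrightarrow> bij f \<and> smooth_map A A f \<and> smooth_map A A (Hilbert_Choice.inv f)"

definition lie_group ::
  "('g::{t2_space, second_countable_topology}, 'z) monoid_scheme \<Rightarrow>
   ('g set \<times> ('g \<Rightarrow> 'e::euclidean_space)) set \<Rightarrow> bool" where
  "lie_group G AG \<longleftrightarrow> group G \<and> carrier G = UNIV \<and> smooth_manifold AG \<and>
     smooth_map (prod_atlas AG AG) AG (\<lambda>(a, b). a \<otimes>\<^bsub>G\<^esub> b) \<and>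
     smooth_map AG AG (\<lambda>a. inv\<^bsub>G\<^esub> a)"

definition smooth_left_action ::
  "('g, 'z) monoid_scheme \<Rightarrow> ('g::topological_space set \<times> ('g \<Rightarrow> 'e::euclidean_space)) set \<Rightarrow>
   ('m::topological_space set \<times> ('m \<Rightarrow> 'f::euclidean_space)) set \<Rightarrow> ('g \<Rightarrow> 'm \<Rightarrow> 'm) \<Rightarrow> bool" where
  "smooth_left_action G AG AM \<Phi> \<longleftrightarrow>
     smooth_map (prod_atlas AG AM) AM (\<lambda>(g, x). \<Phi> g x) \<and>
     (\<forall>x. \<Phi> \<one>\<^bsub>G\<^esub> x = x) \<and>
     (\<forall>g h x. \<Phi> (g \<otimes>\<^bsub>G\<^esub> h) x = \<Phi> g (\<Phi> h x))"

definition is_flow ::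
  "('m::topological_space set \<times> ('m \<Rightarrow> 'f::euclidean_space)) set \<Rightarrow> (real \<Rightarrow> 'm \<Rightarrow> 'm) \<Rightarrow> bool" where
  "is_flow AM \<phi> \<longleftrightarrow> smooth_map (prod_atlas real_atlas AM) AM (\<lambda>(t, x). \<phi> t x) \<and>
     (\<forall>s t. \<phi> (s + t) = \<phi> s \<circ> \<phi> t) \<and> \<phi> 0 = id"

definition weakly_invariant ::
  "('g, 'z) monoid_scheme \<Rightarrow> ('g \<Rightarrow> 'm \<Rightarrow> 'm) \<Rightarrow> ('m \<Rightarrow> 'm) \<Rightarrow> bool" where
  "weakly_invariant G \<Phi> f \<longleftrightarrow>
     (\<exists>\<sigma>. (\<forall>g\<in>carrier G. \<sigma> g \<in> carrier G) \<and>
          (\<forall>g\<in>carrier G. f = \<Phi> (inv\<^bsub>G\<^esub> (\<sigma> g)) \<circ> f \<circ> \<Phi> g))"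

end

theory Submission
  imports Defs
begin

lemma wi_comm:
  assumes grp: "group G" and car: "carrier G = UNIV"
    and one: "\<forall>x. \<Phi> \<one>\<^bsub>G\<^esub> x = x"
    and mult: "\<forall>g h x. \<Phi> (g \<otimes>\<^bsub>G\<^esub> h) x = \<Phi> g (\<Phi> h x)"
    and wf: "weakly_invariant G \<Phi> f"
  shows "\<exists>\<sigma>. \<forall>k x. f (\<Phi> k x) = \<Phi> (\<sigma> k) (f x)"
proof -
  from wf obtain \<sigma> where s: "\<forall>g\<in>carrier G. f = \<Phi> (inv\<^bsub>G\<^esub> (\<sigma> g)) \<circ> f \<circ> \<Phi> g"
    unfolding weakly_invariant_def by blast
  have "f (\<Phi> k x) = \<Phi> (\<sigma> k) (f x)" for k x
  proof -
    have "f x = \<Phi> (inv\<^bsub>G\<^esub> (\<sigma> k)) (f (\<Phi> k x))" using s car by (metis UNIV_I comp_apply)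
    hence "\<Phi> (\<sigma> k) (f x) = \<Phi> (\<sigma> k \<otimes>\<^bsub>G\<^esub> inv\<^bsub>G\<^esub> (\<sigma> k)) (f (\<Phi> k x))" using mult by simp
    also have "\<dots> = f (\<Phi> k x)" using one group.r_inv[OF grp] car by simp
    finally show ?thesis by simp
  qed
  thus ?thesis by blast
qed

lemma wi_compose:
  assumes grp: "group G" and car: "carrier G = UNIV"
    and one: "\<forall>x. \<Phi> \<one>\<^bsub>G\<^esub> x = x"
    and mult: "\<forall>g h x. \<Phi> (g \<otimes>\<^bsub>G\<^esub> h) x = \<Phi> g (\<Phi> h x)"
    and wf: "weakly_invariant G \<Phi> f" and wh: "weakly_invariant G \<Phi> h"
  shows "weakly_invariant G \<Phi> (f \<circ> h)"
proof -
  obtain \<sigma> where s: "\<forall>k x. f (\<Phi> k x) = \<Phi> (\<sigma> k) (f x)"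
    using wi_comm[OF grp car one mult wf] by blast
  from wh obtain \<tau> where t: "\<forall>g\<in>carrier G. h = \<Phi> (inv\<^bsub>G\<^esub> (\<tau> g)) \<circ> h \<circ> \<Phi> g"
    unfolding weakly_invariant_def by blast
  define \<rho> where "\<rho> g = inv\<^bsub>G\<^esub> (\<sigma> (inv\<^bsub>G\<^esub> (\<tau> g)))" for g
  have "f \<circ> h = \<Phi> (inv\<^bsub>G\<^esub> (\<rho> g)) \<circ> (f \<circ> h) \<circ> \<Phi> g" for g
  proof
    fix x
    have "h x = \<Phi> (inv\<^bsub>G\<^esub> (\<tau> g)) (h (\<Phi> g x))" using t car by (metis UNIV_I comp_apply)
    hence "f (h x) = \<Phi> (\<sigma> (inv\<^bsub>G\<^esub> (\<tau> g))) (f (h (\<Phi> g x)))" using s by simp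
    moreover have "inv\<^bsub>G\<^esub> (\<rho> g) = \<sigma> (inv\<^bsub>G\<^esub> (\<tau> g))"
      unfolding \<rho>_def using group.inv_inv[OF grp] car by simp
    ultimately show "(f \<circ> h) x = (\<Phi> (inv\<^bsub>G\<^esub> (\<rho> g)) \<circ> (f \<circ> h) \<circ> \<Phi> g) x" by simp
  qed
  thus ?thesis unfolding weakly_invariant_def using car by blast
qed

theorem lemma1:
  fixes G :: "('g::{t2_space, second_countable_topology}, 'z) monoid_scheme"
    and AG :: "('g set \<times> ('g \<Rightarrow> 'e::euclidean_space)) set"
    and AM :: "('m::{t2_space, second_countable_topology} set \<times> ('m \<Rightarrow> 'f::euclidean_space)) set"
    and \<Phi> :: "'g \<Rightarrow> 'm \<Rightarrow> 'm"
    and \<phi> :: "real \<Rightarrow> 'm \<Rightarrow> 'm"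
  assumes "lie_group G AG"
    and "smooth_manifold AM"
    and "smooth_left_action G AG AM \<Phi>"
    and "is_flow AM \<phi>"
  shows "(\<forall>t. weakly_invariant G \<Phi> (\<phi> t)) \<longleftrightarrow>
         (\<exists>\<epsilon>>0. \<forall>t. -\<epsilon> < t \<and> t < \<epsilon> \<longrightarrow> weakly_invariant G \<Phi> (\<phi> t))"
proof
  assume "\<forall>t. weakly_invariant G \<Phi> (\<phi> t)"
  thus "\<exists>\<epsilon>>0. \<forall>t. -\<epsilon> < t \<and> t < \<epsilon> \<longrightarrow> weakly_invariant G \<Phi> (\<phi> t)"
    by (intro exI[of _ 1]) auto
next
  assume "\<exists>\<epsilon>>0. \<forall>t. -\<epsilon> < t \<and> t < \<epsilon> \<longrightarrow> weakly_invariant G \<Phi> (\<phi> t)"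
  then obtain \<epsilon> where ep: "\<epsilon> > 0" and sm: "\<And>t. -\<epsilon> < t \<Longrightarrow> t < \<epsilon> \<Longrightarrow> weakly_invariant G \<Phi> (\<phi> t)"
    by blast
  have grp: "group G" and car: "carrier G = UNIV" using assms(1) unfolding lie_group_def by auto
  have one: "\<forall>x. \<Phi> \<one>\<^bsub>G\<^esub> x = x" and mult: "\<forall>g h x. \<Phi> (g \<otimes>\<^bsub>G\<^esub> h) x = \<Phi> g (\<Phi> h x)"
    using assms(3) unfolding smooth_left_action_def by auto
  have add: "\<phi> (s + t) = \<phi> s \<circ> \<phi> t" and z: "\<phi> 0 = id" for s t
    using assms(4) unfolding is_flow_def by auto
  have idw: "weakly_invariant G \<Phi> (\<phi> 0)" using sm ep by simp
  have ind: "weakly_invariant G \<Phi> (\<phi> (real n * s))" if "-\<epsilon> < s" "s < \<epsilon>" for n s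
  proof (induction n)
    case 0 thus ?case using idw by simp
  next
    case (Suc n)
    have "\<phi> (real (Suc n) * s) = \<phi> s \<circ> \<phi> (real n * s)"
      using add[of s "real n * s"] by (simp add: algebra_simps)
    thus ?case using wi_compose[OF grp car one mult sm[OF that] Suc] by (simp only:)
  qed
  show "\<forall>t. weakly_invariant G \<Phi> (\<phi> t)"
  proof
    fix t
    obtain n :: nat where n: "\<bar>t\<bar> / \<epsilon> < real n" using reals_Archimedean2 by blast
    have np: "real n > 0" using n ep by (smt (verit) divide_nonneg_pos)
    have "\<bar>t\<bar> < real n * \<epsilon>" using n ep by (simp add: divide_less_eq mult.commute)
    hence "-\<epsilon> < t / real n" "t / real n < \<epsilon>" using np
      by (auto simp: divide_less_eq less_divide_eq abs_less_iff algebra_simps)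
    from ind[OF this, of n] show "weakly_invariant G \<Phi> (\<phi> t)" using np by simp
  qed
qed

end
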